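(* Let $D, N \in \mathbb{N}^+$, let $\mathbf{W} = [\mathbf{w}_1, \dots, \mathbf{w}_N] \in \mathbb{R}^{D\times N}$ be arbitrary, and let $\mathbf{f}_t, \mathbf{f}_s \in \mathbb{R}^D$ be nonzero vectors with the same direction, i.e. $\mathbf{f}_s = c\,\mathbf{f}_t$ for some $c>0$. Define, for $\mathbf{f}, \mathbf{g} \in \mathbb{R}^D$, $$\mathcal{L}_{lsh}(\mathbf{f}, \mathbf{g}) = -\frac{1}{N}\sum_{j=1}^{N}\big[h_j \log p_j + (1-h_j)\log(1-p_j)\big],\quad h_j = \operatorname{sign}(\mathbf{w}_j^{\mathsf{T}}\mathbf{f}),\ p_j = \sigma(\mathbf{w}_j^{\mathsf{T}}\mathbf{g}),$$ where $\operatorname{sign}(x) = 1$ if $x>0$ and $\operatorname{sign}(x)=0$ otherwise, and $\sigma(x) = 1/(1+e^{-x})$. Then for every $s>1$, $$\mathcal{L}_{lsh}(\mathbf{f}_t, s\,\mathbf{f}_s) \le \mathcal{L}_{lsh}(\mathbf{f}_t, \mathbf{f}_s).$$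
   Context: This is the locality-sensitive-hashing (LSH) loss with zero bias: the teacher feature $\mathbf{f}_t$ is hashed into binary codes $h_j$ by the random hyperplanes $\mathbf{w}_j$, and the student feature $\mathbf{f}_s$ is scored by the binary cross-entropy against these codes. *)

theory Defs
  imports "HOL-Analysis.Analysis"
begin

definition hsign :: "real \<Rightarrow> real" where
  "hsign x = (if x > 0 then 1 else 0)"

definition sigmoid :: "real \<Rightarrow> real" where
  "sigmoid x = 1 / (1 + exp (- x))"

text \<open>W is a D x N matrix (type index 'd = rows, 'n = columns); w_j = column j W.\<close>
definition L_lsh :: "real ^ 'n ^ 'd \<Rightarrow> real ^ 'd \<Rightarrow> real ^ 'd \<Rightarrow> real" where
  "L_lsh W f g = - (1 / real CARD('n)) *
     (\<Sum>j\<in>UNIV. hsign (column j W \<bullet> f) * ln (sigmoid (column j W \<bullet> g))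
        + (1 - hsign (column j W \<bullet> f)) * ln (1 - sigmoid (column j W \<bullet> g)))"

end

theory Submission
  imports Defs
begin

lemma sig_pos: "sigmoid x > 0"
  unfolding sigmoid_def by (simp add: add_pos_pos)

lemma sig_lt1: "1 - sigmoid x > 0"
  unfolding sigmoid_def by (simp add: field_simps add_pos_pos)

lemma sig_mono: "x \<le> y \<Longrightarrow> sigmoid x \<le> sigmoid y"
  unfolding sigmoid_def
  by (rule divide_left_mono) (auto intro!: add_pos_pos mult_pos_pos)

lemma term_mono:
  fixes a c s :: real
  assumes "c > 0" "s > 1"
  shows "hsign a * ln (sigmoid (c*a)) + (1 - hsign a) * ln (1 - sigmoid (c*a))
       \<le> hsign a * ln (sigmoid (s*(c*a))) + (1 - hsign a) * ln (1 - sigmoid (s*(c*a)))"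
proof (cases "a > 0")
  case True
  have "c*a \<le> s*(c*a)" using True assms by (simp add: mult_pos_pos)
  hence "sigmoid (c*a) \<le> sigmoid (s*(c*a))" by (rule sig_mono)
  hence "ln (sigmoid (c*a)) \<le> ln (sigmoid (s*(c*a)))" using sig_pos by simp
  thus ?thesis using True by (simp add: hsign_def)
next
  case False
  have "c*a \<le> 0" using False assms by (simp add: mult_nonneg_nonpos)
  hence "(s-1)*(c*a) \<le> 0" using assms mult_nonneg_nonpos[of "s-1" "c*a"] by linarith
  hence "s*(c*a) \<le> c*a" by (simp add: algebra_simps)
  hence "sigmoid (s*(c*a)) \<le> sigmoid (c*a)" by (rule sig_mono)
  hence "ln (1 - sigmoid (c*a)) \<le> ln (1 - sigmoid (s*(c*a)))" using sig_lt1 by simp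
  thus ?thesis using False by (simp add: hsign_def)
qed

theorem claim2:
  fixes W :: "real ^ 'n ^ 'd" and f_t f_s :: "real ^ 'd" and c s :: real
  assumes "f_t \<noteq> 0" and "f_s \<noteq> 0" and "c > 0" and "f_s = c *\<^sub>R f_t" and "s > 1"
  shows "L_lsh W f_t (s *\<^sub>R f_s) \<le> L_lsh W f_t f_s"
proof -
  have "(\<Sum>j\<in>UNIV. hsign (column j W \<bullet> f_t) * ln (sigmoid (column j W \<bullet> f_s))
        + (1 - hsign (column j W \<bullet> f_t)) * ln (1 - sigmoid (column j W \<bullet> f_s)))
     \<le> (\<Sum>j\<in>UNIV. hsign (column j W \<bullet> f_t) * ln (sigmoid (column j W \<bullet> (s *\<^sub>R f_s)))
        + (1 - hsign (column j W \<bullet> f_t)) * ln (1 - sigmoid (column j W \<bullet> (s *\<^sub>R f_s))))"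
    (is "?A \<le> ?B")
  proof (rule sum_mono)
    fix j
    have e1: "column j W \<bullet> f_s = c * (column j W \<bullet> f_t)" using assms(4) by simp
    have e2: "column j W \<bullet> (s *\<^sub>R f_s) = s * (c * (column j W \<bullet> f_t))"
      using assms(4) by simp
    show "hsign (column j W \<bullet> f_t) * ln (sigmoid (column j W \<bullet> f_s))
        + (1 - hsign (column j W \<bullet> f_t)) * ln (1 - sigmoid (column j W \<bullet> f_s))
       \<le> hsign (column j W \<bullet> f_t) * ln (sigmoid (column j W \<bullet> (s *\<^sub>R f_s)))
        + (1 - hsign (column j W \<bullet> f_t)) * ln (1 - sigmoid (column j W \<bullet> (s *\<^sub>R f_s)))"
      unfolding e1 e2 by (rule term_mono[OF assms(3) assms(5)])
  qed
  moreover have "0 \<le> 1 / real CARD('n)" by simp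
  ultimately show ?thesis unfolding L_lsh_def
    by (simp add: divide_right_mono)
qed

end
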